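(* For every integer $\mathcal A\ge 1$ and all widths $w_i\ge 1$ ($i=1,\dots,\mathcal A$), both $\mathcal F^{\text{poly}}_{\mathcal A}$ and $\mathcal F^{\text{DNN}}_{\mathcal A,\bm w}$ are closed under the fix-and-shift transformation: for every $f$ in the class and every $c\in\mathbb R$, the function $f_c(\bm x,z):=f(\bm x,c)+c-z$ (for $(\bm x,z)\in\mathbb R^p\times\mathbb R$) also belongs to the class.
   Context: The $\mathcal A$-th order polynomial space is $\mathcal F^{\text{poly}}_{\mathcal A}=\{f:\mathbb R^p\times\mathbb R\to\mathbb R\mid f(\bm x,z)=\sum_{0\le i_1+\dots+i_p+j\le\mathcal A}\alpha_{i_1,\dots,i_p,j}\,z^j\prod_{k=1}^p x_k^{i_k},\ \alpha_{i_1,\dots,i_p,j}\in\mathbb R\}$. The linear-augmented DNN space of depth $\mathcal A$ with widths $w_0=p+1,w_1,\dots,w_{\mathcal A},w_{\mathcal A+1}=1$ is $\mathcal F^{\text{DNN}}_{\mathcal A,\bm w}=\{f\mid f(\bm x,z)=l^{\text{aug}}((\bm x;z))+l_{\mathcal A}\circ\sigma\circ l_{\mathcal A-1}\circ\cdots\circ\sigma\circ l_0((\bm x;z))\}$, where $(\bm x;z)\in\mathbb R^{p+1}$ is the concatenated input, $l^{\text{aug}}(\bm u)=\bm W^{\text{aug}\top}\bm u$ with $\bm W^{\text{aug}}\in\mathbb R^{w_0}$ arbitrary, $l_i(\bm u)=\bm W_i\bm u+\bm b_i$ with arbitrary $\bm W_i\in\mathbb R^{w_{i+1}\times w_i}$,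 $\bm b_i\in\mathbb R^{w_{i+1}}$ for $i=0,\dots,\mathcal A$, and $\sigma$ is a fixed activation function applied coordinatewise (e.g., ReLU). *)

theory Defs
  imports Complex_Main
begin

text \<open>Vectors in R^p are represented as functions nat => real, where only the
coordinates 0..p-1 are meaningful. A function on R^p x R is a
function (nat => real) => real => real.\<close>

definition multi_indices :: "nat \<Rightarrow> nat \<Rightarrow> ((nat \<Rightarrow> nat) \<times> nat) set" where
  "multi_indices p A = {(i, j). (\<forall>k\<ge>p. i k = 0) \<and> (\<Sum>k<p. i k) + j \<le> A}"

definition poly_space :: "nat \<Rightarrow> nat \<Rightarrow> ((nat \<Rightarrow> real) \<Rightarrow> real \<Rightarrow> real) set" where
  "poly_space p A = {f. \<exists>\<alpha> :: (nat \<Rightarrow> nat) \<times> nat \<Rightarrow> real.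
      \<forall>x z. f x z = (\<Sum>(i, j)\<in>multi_indices p A. \<alpha> (i, j) * z ^ j * (\<Prod>k<p. x k ^ i k))}"

definition concat_input :: "nat \<Rightarrow> (nat \<Rightarrow> real) \<Rightarrow> real \<Rightarrow> (nat \<Rightarrow> real)" where
  "concat_input p x z = (\<lambda>k. if k < p then x k else if k = p then z else 0)"

definition affine_map :: "(nat \<Rightarrow> nat \<Rightarrow> real) \<Rightarrow> (nat \<Rightarrow> real) \<Rightarrow> nat \<Rightarrow> nat
    \<Rightarrow> (nat \<Rightarrow> real) \<Rightarrow> (nat \<Rightarrow> real)" where
  "affine_map W b m n u = (\<lambda>i. if i < m then (\<Sum>j<n. W i j * u j) + b i else 0)"

definition dnn_width :: "nat \<Rightarrow> nat \<Rightarrow> (nat \<Rightarrow> nat) \<Rightarrow> nat \<Rightarrow> nat" where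
  "dnn_width p A w i = (if i = 0 then p + 1 else if i = A + 1 then 1 else w i)"

fun dnn_forward :: "(real \<Rightarrow> real) \<Rightarrow> (nat \<Rightarrow> nat) \<Rightarrow> (nat \<Rightarrow> nat \<Rightarrow> nat \<Rightarrow> real)
    \<Rightarrow> (nat \<Rightarrow> nat \<Rightarrow> real) \<Rightarrow> nat \<Rightarrow> (nat \<Rightarrow> real) \<Rightarrow> (nat \<Rightarrow> real)" where
  "dnn_forward \<sigma> wd Ws bs 0 u = affine_map (Ws 0) (bs 0) (wd 1) (wd 0) u"
| "dnn_forward \<sigma> wd Ws bs (Suc k) u =
     affine_map (Ws (Suc k)) (bs (Suc k)) (wd (Suc (Suc k))) (wd (Suc k))
       (\<lambda>i. \<sigma> (dnn_forward \<sigma> wd Ws bs k u i))"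

definition dnn_space :: "(real \<Rightarrow> real) \<Rightarrow> nat \<Rightarrow> nat \<Rightarrow> (nat \<Rightarrow> nat)
    \<Rightarrow> ((nat \<Rightarrow> real) \<Rightarrow> real \<Rightarrow> real) set" where
  "dnn_space \<sigma> p A w = {f. \<exists>(Waug :: nat \<Rightarrow> real) (Ws :: nat \<Rightarrow> nat \<Rightarrow> nat \<Rightarrow> real)
      (bs :: nat \<Rightarrow> nat \<Rightarrow> real).
      \<forall>x z. f x z = (\<Sum>k<p + 1. Waug k * concat_input p x z k)
        + dnn_forward \<sigma> (dnn_width p A w) Ws bs A (concat_input p x z) 0}"

definition fix_shift :: "((nat \<Rightarrow> real) \<Rightarrow> real \<Rightarrow> real) \<Rightarrow> real \<Rightarrow> ((nat \<Rightarrow> real) \<Rightarrow> real \<Rightarrow> real)" where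
  "fix_shift f c = (\<lambda>x z. f x c + c - z)"

end

theory Submission
  imports Defs "HOL-Library.FuncSet"
begin

lemma mi_finite: "finite (multi_indices p A)"
proof -
  let ?S = "{i :: nat \<Rightarrow> nat. (\<forall>k\<ge>p. i k = 0) \<and> (\<forall>k. i k \<le> A)}"
  have sub: "multi_indices p A \<subseteq> ?S \<times> {..A}"
  proof
    fix ij assume "ij \<in> multi_indices p A"
    then obtain i j where ij: "ij = (i,j)" "\<forall>k\<ge>p. i k = 0" "(\<Sum>k<p. i k) + j \<le> A"
      unfolding multi_indices_def by auto
    have "\<forall>k. i k \<le> A"
    proof
      fix k show "i k \<le> A"
      proof (cases "k < p")
        case True
        have "i k \<le> (\<Sum>k<p. i k)" using True by (intro member_le_sum) auto
        then show ?thesis using ij by linarith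
      next
        case False then show ?thesis using ij by auto
      qed
    qed
    then show "ij \<in> ?S \<times> {..A}" using ij by auto
  qed
  have inj: "inj_on (\<lambda>i. restrict i {..<p}) ?S"
  proof (rule inj_onI)
    fix a b assume a: "a \<in> ?S" and b: "b \<in> ?S" and e: "restrict a {..<p} = restrict b {..<p}"
    show "a = b"
    proof
      fix k show "a k = b k"
      proof (cases "k < p")
        case True
        have "restrict a {..<p} k = restrict b {..<p} k" using e by simp
        then show ?thesis using True by simp
      next
        case False then show ?thesis using a b by auto
      qed
    qed
  qed
  have "(\<lambda>i. restrict i {..<p}) ` ?S \<subseteq> PiE {..<p} (\<lambda>_. {..A})" by (auto simp: PiE_def extensional_def)
  then have "finite ((\<lambda>i. restrict i {..<p}) ` ?S)"
    by (rule finite_subset) (intro finite_PiE, auto)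
  then have "finite ?S" using inj finite_imageD by blast
  then show ?thesis using sub finite_subset by blast
qed

lemma poly_zero: "(\<lambda>x z. 0) \<in> poly_space p A"
  unfolding poly_space_def by (rule CollectI, rule exI[of _ "\<lambda>_. 0"]) simp

lemma poly_add: assumes "f \<in> poly_space p A" "g \<in> poly_space p A"
  shows "(\<lambda>x z. f x z + g x z) \<in> poly_space p A"
proof -
  obtain a where a: "\<forall>x z. f x z = (\<Sum>(i, j)\<in>multi_indices p A. a (i, j) * z ^ j * (\<Prod>k<p. x k ^ i k))"
    using assms(1) unfolding poly_space_def by auto
  obtain b where b: "\<forall>x z. g x z = (\<Sum>(i, j)\<in>multi_indices p A. b (i, j) * z ^ j * (\<Prod>k<p. x k ^ i k))"
    using assms(2) unfolding poly_space_def by auto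
  have "\<forall>x z. f x z + g x z = (\<Sum>(i, j)\<in>multi_indices p A. (a (i,j) + b (i,j)) * z ^ j * (\<Prod>k<p. x k ^ i k))"
    using a b by (simp add: sum.distrib[symmetric] case_prod_beta algebra_simps)
  then show ?thesis unfolding poly_space_def by (intro CollectI exI[of _ "\<lambda>ij. a ij + b ij"]) simp
qed

lemma poly_scale: assumes "f \<in> poly_space p A"
  shows "(\<lambda>x z. r * f x z) \<in> poly_space p A"
proof -
  obtain a where a: "\<forall>x z. f x z = (\<Sum>(i, j)\<in>multi_indices p A. a (i, j) * z ^ j * (\<Prod>k<p. x k ^ i k))"
    using assms(1) unfolding poly_space_def by auto
  have "\<forall>x z. r * f x z = (\<Sum>(i, j)\<in>multi_indices p A. (r * a (i,j)) * z ^ j * (\<Prod>k<p. x k ^ i k))"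
    using a by (simp add: sum_distrib_left case_prod_beta algebra_simps)
  then show ?thesis unfolding poly_space_def by (intro CollectI exI[of _ "\<lambda>ij. r * a ij"]) simp
qed

lemma poly_sum: "finite S \<Longrightarrow> (\<And>s. s \<in> S \<Longrightarrow> F s \<in> poly_space p A) \<Longrightarrow>
   (\<lambda>x z. \<Sum>s\<in>S. F s x z) \<in> poly_space p A"
proof (induction S rule: finite_induct)
  case empty then show ?case using poly_zero by simp
next
  case (insert s S)
  then show ?case using poly_add[of "F s" p A "\<lambda>x z. \<Sum>s\<in>S. F s x z"] by simp
qed

lemma poly_mono: assumes "(i0, j0) \<in> multi_indices p A"
  shows "(\<lambda>x z. z ^ j0 * (\<Prod>k<p. x k ^ i0 k)) \<in> poly_space p A"
  unfolding poly_space_def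
proof (rule CollectI, rule exI[of _ "\<lambda>ij. if ij = (i0, j0) then 1 else 0"], intro allI)
  fix x :: "nat \<Rightarrow> real" and z :: real
  have "(\<Sum>(i, j)\<in>multi_indices p A. (if (i, j) = (i0, j0) then 1 else 0) * z ^ j * (\<Prod>k<p. x k ^ i k))
     = (\<Sum>ij\<in>multi_indices p A. if ij = (i0, j0) then z ^ j0 * (\<Prod>k<p. x k ^ i0 k) else 0)"
  proof (rule sum.cong[OF refl])
    fix ij :: "(nat \<Rightarrow> nat) \<times> nat"
    show "(case ij of (i, j) \<Rightarrow> (if (i, j) = (i0, j0) then 1 else 0) * z ^ j * (\<Prod>k<p. x k ^ i k))
      = (if ij = (i0, j0) then z ^ j0 * (\<Prod>k<p. x k ^ i0 k) else 0)"
      by (cases ij; cases "ij = (i0, j0)") auto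
  qed
  also have "\<dots> = z ^ j0 * (\<Prod>k<p. x k ^ i0 k)"
    using assms mi_finite by (simp add: sum.delta')
  finally show "z ^ j0 * (\<Prod>k<p. x k ^ i0 k) = (\<Sum>(i, j)\<in>multi_indices p A. (if (i, j) = (i0, j0) then 1 else 0) * z ^ j * (\<Prod>k<p. x k ^ i k))"
    by simp
qed

lemma poly_part: assumes "A \<ge> 1" "f \<in> poly_space p A"
  shows "fix_shift f c \<in> poly_space p A"
proof -
  obtain a where a: "\<forall>x z. f x z = (\<Sum>(i, j)\<in>multi_indices p A. a (i, j) * z ^ j * (\<Prod>k<p. x k ^ i k))"
    using assms(2) unfolding poly_space_def by auto
  have m0: "((\<lambda>_. 0), 0) \<in> multi_indices p A" and m1: "((\<lambda>_. 0), 1) \<in> multi_indices p A"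
    using assms(1) unfolding multi_indices_def by auto
  have t: "(\<lambda>x z. \<Sum>ij\<in>multi_indices p A. (a ij * c ^ snd ij) * (z ^ 0 * (\<Prod>k<p. x k ^ fst ij k))) \<in> poly_space p A"
  proof (rule poly_sum[OF mi_finite])
    fix ij assume "ij \<in> multi_indices p A"
    then have "(fst ij, 0) \<in> multi_indices p A" unfolding multi_indices_def by auto
    then show "(\<lambda>x z. (a ij * c ^ snd ij) * (z ^ 0 * (\<Prod>k<p. x k ^ fst ij k))) \<in> poly_space p A"
      by (rule poly_scale[OF poly_mono])
  qed
  have t0: "(\<lambda>x z. c * (z ^ 0 * (\<Prod>k<p. x k ^ 0))) \<in> poly_space p A"
    by (rule poly_scale[OF poly_mono[OF m0]])
  have t1: "(\<lambda>x z. (-1) * (z ^ 1 * (\<Prod>k<p. x k ^ 0))) \<in> poly_space p A"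
    by (rule poly_scale[OF poly_mono[OF m1]])
  have "(\<lambda>x z. (\<Sum>ij\<in>multi_indices p A. (a ij * c ^ snd ij) * (z ^ 0 * (\<Prod>k<p. x k ^ fst ij k)))
     + c * (z ^ 0 * (\<Prod>k<p. x k ^ 0)) + (-1) * (z ^ 1 * (\<Prod>k<p. x k ^ 0))) \<in> poly_space p A"
    by (intro poly_add t t0 t1)
  moreover have "fix_shift f c = (\<lambda>x z. (\<Sum>ij\<in>multi_indices p A. (a ij * c ^ snd ij) * (z ^ 0 * (\<Prod>k<p. x k ^ fst ij k)))
     + c * (z ^ 0 * (\<Prod>k<p. x k ^ 0)) + (-1) * (z ^ 1 * (\<Prod>k<p. x k ^ 0)))"
    unfolding fix_shift_def using a by (auto simp: case_prod_beta intro!: ext sum.cong)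
  ultimately show ?thesis by simp
qed


lemma dnn_part: assumes "A \<ge> 1" "f \<in> dnn_space \<sigma> p A w"
  shows "fix_shift f c \<in> dnn_space \<sigma> p A w"
proof -
  obtain Waug Ws bs where f: "\<forall>x z. f x z = (\<Sum>k<p + 1. Waug k * concat_input p x z k)
        + dnn_forward \<sigma> (dnn_width p A w) Ws bs A (concat_input p x z) 0"
    using assms(2) unfolding dnn_space_def by auto
  define wd where "wd = dnn_width p A w"
  define d where "d = Waug p * c + c"
  define Ws' where "Ws' = (\<lambda>n. if n = 0 then (\<lambda>i j. if j = p then 0 else Ws 0 i j) else Ws n)"
  define bs' where "bs' = (\<lambda>n. if n = 0 then (\<lambda>i. bs 0 i + Ws 0 i p * c)
     else if n = A then (\<lambda>i. bs A i + (if i = 0 then d else 0)) else bs n)"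
  define Waug' where "Waug' = (\<lambda>k. if k = p then -1 else Waug k)"
  have wd0: "wd 0 = p + 1" unfolding wd_def dnn_width_def by simp
  have fw: "k < A \<Longrightarrow> dnn_forward \<sigma> wd Ws' bs' k (concat_input p x z)
      = dnn_forward \<sigma> wd Ws bs k (concat_input p x c)" for k x z
  proof (induction k)
    case 0
    have "(\<Sum>j<p+1. Ws' 0 i j * concat_input p x z j) + bs' 0 i
        = (\<Sum>j<p+1. Ws 0 i j * concat_input p x c j) + bs 0 i" for i
      by (simp add: Ws'_def bs'_def concat_input_def algebra_simps)
    then show ?case using wd0 by (auto simp add: affine_map_def)
  next
    case (Suc k)
    then have "Suc k \<noteq> A" by simp
    then show ?case using Suc by (simp add: Ws'_def bs'_def affine_map_def)
  qed
  obtain m where m: "A = Suc m" using assms(1) by (cases A) auto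
  have wdA: "wd (Suc (Suc m)) = 1" unfolding wd_def dnn_width_def m by simp
  have out: "dnn_forward \<sigma> wd Ws' bs' A (concat_input p x z) 0
      = dnn_forward \<sigma> wd Ws bs A (concat_input p x c) 0 + d" for x z
    using fw[of m x z] wdA by (simp add: m affine_map_def Ws'_def bs'_def)
  have aug: "(\<Sum>k<p + 1. Waug k * concat_input p x c k) + c - z
      = (\<Sum>k<p + 1. Waug' k * concat_input p x z k) + d" for x z
  proof -
    have "(\<Sum>k<p. Waug k * concat_input p x c k) = (\<Sum>k<p. Waug' k * concat_input p x z k)"
      by (intro sum.cong) (auto simp: Waug'_def concat_input_def)
    then show ?thesis by (simp add: d_def Waug'_def concat_input_def)
  qed
  have "\<forall>x z. fix_shift f c x z = (\<Sum>k<p + 1. Waug' k * concat_input p x z k)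
        + dnn_forward \<sigma> (dnn_width p A w) Ws' bs' A (concat_input p x z) 0"
    using f aug out unfolding fix_shift_def wd_def by (simp add: algebra_simps)
  then show ?thesis unfolding dnn_space_def by blast
qed

theorem lemma2:
  fixes p A :: nat and w :: "nat \<Rightarrow> nat" and \<sigma> :: "real \<Rightarrow> real"
  assumes "A \<ge> 1" and "\<forall>i\<in>{1..A}. w i \<ge> 1"
  shows "(\<forall>f\<in>poly_space p A. \<forall>c. fix_shift f c \<in> poly_space p A)
       \<and> (\<forall>f\<in>dnn_space \<sigma> p A w. \<forall>c. fix_shift f c \<in> dnn_space \<sigma> p A w)"
  using poly_part dnn_part assms(1) by blast

end
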